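(* Fix $q\in[0,1]$, $p\in(0,1)\setminus\{1/2\}$, an integer $k\geq1$ and $f:[0,1]\to[0,1]$, and let $\{S_n\}$ be the elephant random walk with $k$ extractions without replacement described in the context, with $g$ and $H$ as defined there. Suppose that either (A1) $p>1/2$ and $f(1)<p/(2p-1)$, or (A2) $p<1/2$ and $f(0)<(1-p)/(1-2p)$. If $H$ has a unique fixed point $x^*$ in $[-1,1]$, then $S_n/n\to x^*$ almost surely. Moreover, the same conclusion holds (with $x^*$ the unique fixed point of $H$ in $(-1,1)$) if (A1) or (A2) holds and $H$ satisfies one of: (B1) $H$ is strictly decreasing on $(-1,1)$; (B2) $H$ is strictly convex on $(-1,1)$ or strictly concave on $(-1,1)$; (B3) $H$ is a contraction on $(-1,1)$.
   Context: The model (sampling without replacement, constant sample size $k$): set $X_0=0$ and let $X_1,\dots,X_k$ be i.i.d. with values in $\{\pm1\}$ and $P(X_i=1)=q$. Let $\mathcal{F}_n$ be the $\sigma$-field of all information of the process up to time $n$. For each $n\geq k$, draw an ordered $k$-tuple $(U_{n,1},\dots,U_{n,k})$ of distinct elements of $\{1,\dots,n\}$, uniformly among all such tuples (each with probability $\{\binom{n}{k}k!\}^{-1}$), independently of the past; set $C_n^+=\sum_{i=1}^k\chi\{X_{U_{n,i}}=1\}$, and conditionally on $\mathcal{F}_n$ and the sample let $X_{n+1}=1$ with probability $g(C_n^+/k)$ and $X_{n+1}=-1$ otherwise, where $g(x)=pf(x)+(1-p)\{1-f(x)\}$. Set $S_n=\sum_{i=1}^nX_i$. Define $H(x)=2^{1-k}\sum_{i=0}^{k}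 g(i/k)\binom{k}{i}(1+x)^{i}(1-x)^{k-i}-1$ for $x\in[-1,1]$. *)

theory Defs
  imports "HOL-Probability.Probability"
begin

definition g_fun :: "real \<Rightarrow> (real \<Rightarrow> real) \<Rightarrow> real \<Rightarrow> real" where
  "g_fun p f x = p * f x + (1 - p) * (1 - f x)"

definition H_fun :: "nat \<Rightarrow> (real \<Rightarrow> real) \<Rightarrow> real \<Rightarrow> real" where
  "H_fun k g x = 2 powr (1 - real k) *
     (\<Sum>i = 0..k. g (real i / real k) * real (k choose i) * (1 + x) ^ i * (1 - x) ^ (k - i)) - 1"

definition tuples :: "nat \<Rightarrow> nat \<Rightarrow> (nat \<Rightarrow> nat) set" where
  "tuples k n = {t \<in> {0..<k} \<rightarrow>\<^sub>E {1..n}. inj_on t {0..<k}}"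

text \<open>Conditional probability (given the past path x) that X_{n+1} = 1: average over the
  uniformly chosen ordered sample of g(C_n^+/k).\<close>
definition samp_prob :: "nat \<Rightarrow> nat \<Rightarrow> (real \<Rightarrow> real) \<Rightarrow> (nat \<Rightarrow> real) \<Rightarrow> real" where
  "samp_prob k n g x =
     (\<Sum>t\<in>tuples k n. g (real (card {i \<in> {0..<k}. x (t i) = 1}) / real k)) / real (card (tuples k n))"

definition strictly_convex_on :: "real set \<Rightarrow> (real \<Rightarrow> real) \<Rightarrow> bool" where
  "strictly_convex_on S h \<longleftrightarrow> (\<forall>x\<in>S. \<forall>y\<in>S. \<forall>t. x \<noteq> y \<and> 0 < t \<and> t < 1 \<longrightarrow>
      h (t * x + (1 - t) * y) < t * h x + (1 - t) * h y)"

definition strictly_concave_on :: "real set \<Rightarrow> (real \<Rightarrow> real) \<Rightarrow> bool" where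
  "strictly_concave_on S h \<longleftrightarrow> strictly_convex_on S (\<lambda>x. - h x)"

definition contraction_on :: "real set \<Rightarrow> (real \<Rightarrow> real) \<Rightarrow> bool" where
  "contraction_on S h \<longleftrightarrow> (\<exists>c<1. \<forall>x\<in>S. \<forall>y\<in>S. \<bar>h x - h y\<bar> \<le> c * \<bar>x - y\<bar>)"

end

theory Submission
  imports Defs
begin


lemma det_upper:
  fixes y W :: "nat \<Rightarrow> real" and a B \<delta> :: real
  assumes conv: "(\<lambda>n. W n / real n - y n) \<longlonglongrightarrow> 0"
    and bnd: "\<And>n. W (Suc n) - W n \<le> B"
    and drift: "\<And>\<delta>. \<delta> > 0 \<Longrightarrow> \<exists>c>0. eventually (\<lambda>n. y n \<ge> a + \<delta> \<longrightarrow> W (Suc n) - W n \<le> y n - c) sequentially"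
    and d: "\<delta> > 0"
  shows "eventually (\<lambda>n. y n \<le> a + \<delta>) sequentially"
proof -
  obtain c where c: "c > 0" and ev1: "eventually (\<lambda>n. y n \<ge> a + \<delta>/2 \<longrightarrow> W (Suc n) - W n \<le> y n - c) sequentially"
    using drift[of "\<delta>/2"] d by auto
  define \<eta> where "\<eta> = min (c/2) (\<delta>/8)"
  have eta: "\<eta> > 0" "\<eta> \<le> c/2" "\<eta> \<le> \<delta>/8" using c d by (auto simp: \<eta>_def)
  define w where "w n = W n / real n" for n
  have ev2: "eventually (\<lambda>n. \<bar>w n - y n\<bar> < \<eta>) sequentially"
    using tendstoD[OF conv eta(1)] by (simp add: w_def dist_real_def)
  define T where "T = a + 3*\<delta>/4"
  define L where "L = a + \<delta>/2 + \<eta>"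
  have LT: "L \<le> T - \<delta>/8" using eta d by (simp add: L_def T_def)
  obtain N0 :: nat where N0: "real N0 \<ge> \<bar>B - T\<bar> * 8 / \<delta>"
    using real_arch_simple by blast
  have ev3: "eventually (\<lambda>n. n \<ge> max 1 N0) sequentially" by (rule eventually_ge_at_top)
  obtain N where N: "\<And>n. n \<ge> N \<Longrightarrow> (y n \<ge> a + \<delta>/2 \<longrightarrow> W (Suc n) - W n \<le> y n - c) \<and> \<bar>w n - y n\<bar> < \<eta> \<and> n \<ge> max 1 N0"
    using eventually_conj[OF ev1 eventually_conj[OF ev2 ev3]] unfolding eventually_sequentially by blast
  have stp: "(y n \<ge> a + \<delta>/2 \<longrightarrow> w (Suc n) \<le> w n - c/(2*(real n+1))) \<and> (y n < a + \<delta>/2 \<longrightarrow> w (Suc n) \<le> T)"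
    if n: "n \<ge> N" for n
  proof -
    from N[OF n] have h1: "y n \<ge> a + \<delta>/2 \<longrightarrow> W (Suc n) - W n \<le> y n - c"
      and h2: "\<bar>w n - y n\<bar> < \<eta>" and h3: "n \<ge> 1" "n \<ge> N0" by auto
    have Wn: "W n = real n * w n" using h3 by (simp add: w_def)
    have wS: "w (Suc n) = (W n + (W (Suc n) - W n)) / (real n + 1)" by (simp add: w_def)
    have pos: "real n + 1 > 0" by simp
    have wS': "w (Suc n) = W (Suc n) / (real n + 1)" by (simp add: w_def add.commute)
    show ?thesis
    proof (intro conjI impI)
      assume "y n \<ge> a + \<delta>/2"
      with h1 have "W (Suc n) - W n \<le> y n - c" by simp
      also have "\<dots> \<le> w n - c/2" using h2 eta by linarith
      finally have dd: "W (Suc n) - W n \<le> w n - c/2" .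
      have "W (Suc n) \<le> real n * w n + (w n - c/2)" using dd Wn by linarith
      then have "w (Suc n) \<le> (real n * w n + (w n - c/2)) / (real n + 1)"
        unfolding wS' using pos by (simp add: divide_right_mono)
      also have "\<dots> = w n - c/(2*(real n+1))" using pos by (simp add: field_simps)
      finally show "w (Suc n) \<le> w n - c/(2*(real n+1))" .
    next
      assume "y n < a + \<delta>/2"
      then have wl: "w n \<le> L" using h2 by (simp add: L_def)
      have "real n * w n + (W (Suc n) - W n) \<le> real n * L + B"
        using bnd[of n] wl by (simp add: mult_left_mono add_mono)
      also have "\<dots> \<le> (real n + 1) * T"
      proof -
        have "B - T \<le> real n * (\<delta>/8)"
        proof -
          have "B - T \<le> \<bar>B - T\<bar> * 8 / \<delta> * (\<delta>/8)" using d by simp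
          also have "\<dots> \<le> real n * (\<delta>/8)" using N0 h3 d
            by (intro mult_right_mono) auto
          finally show ?thesis .
        qed
        moreover have "real n * L \<le> real n * (T - \<delta>/8)" using LT by (simp add: mult_left_mono)
        ultimately show ?thesis by (simp add: algebra_simps)
      qed
      finally have "W (Suc n) \<le> (real n + 1) * T" using Wn by linarith
      then show "w (Suc n) \<le> T" unfolding wS' using pos by (simp add: divide_le_eq mult.commute)
    qed
  qed
  have ex: "\<exists>m\<ge>N. w m \<le> T"
  proof (rule ccontr)
    assume "\<not> ?thesis"
    then have gt: "\<And>m. m \<ge> N \<Longrightarrow> w m > T" by force
    have dec: "w (Suc m) \<le> w m - c/(2*(real m+1))" if "m \<ge> N" for m
    proof -
      have "y m \<ge> a + \<delta>/2" using gt[OF that] N[OF that] eta unfolding T_def by linarith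
      then show ?thesis using stp[OF that] by simp
    qed
    define u where "u i = w (N + i)" for i
    have nn: "0 \<le> u i - u (Suc i)" for i
    proof -
      have "c/(2*(real (N+i)+1)) \<ge> 0" using c by simp
      then show ?thesis using dec[of "N+i"] unfolding u_def by simp
    qed
    have tel: "(\<Sum>i<n. u i - u (Suc i)) \<le> u 0 - T" for n
    proof -
      have "(\<Sum>i<n. u i - u (Suc i)) = u 0 - u n" by (rule sum_lessThan_telescope')
      then show ?thesis using gt[of "N+n"] by (simp add: u_def)
    qed
    have sg: "summable (\<lambda>i. u i - u (Suc i))"
      by (rule summableI_nonneg_bounded[OF nn tel])
    have nb: "norm (c/2 * inverse (real (i + (N+1)))) \<le> u i - u (Suc i)" for i
      using dec[of "N+i"] c by (simp add: u_def field_simps)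
    have "summable (\<lambda>i. c/2 * inverse (real (i + (N+1))))"
      using summable_comparison_test'[OF sg nb] by blast
    then have "summable (\<lambda>i. inverse (real (i + (N+1))))"
      using c summable_cmult_iff[of "c/2" "\<lambda>i. inverse (real (i + (N+1)))"] by simp
    then have "summable (\<lambda>i. inverse (of_nat i) :: real)"
      using summable_iff_shift[of "\<lambda>i. inverse (of_nat i) :: real" "N+1"] by simp
    then show False using not_summable_harmonic by blast
  qed
  then obtain m where m: "m \<ge> N" "w m \<le> T" by blast
  have all: "w n \<le> T" if "n \<ge> m" for n
    using that
  proof (induction n rule: dec_induct)
    case base then show ?case using m by simp
  next
    case (step n)
    have nN: "n \<ge> N" using step m by simp
    show ?case
    proof (cases "y n \<ge> a + \<delta>/2")
      case True
      then have "w (Suc n) \<le> w n - c/(2*(real n+1))" using stp[OF nN] by simp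
      moreover have "c/(2*(real n+1)) \<ge> 0" using c by simp
      ultimately show ?thesis using step.IH by linarith
    next
      case False
      then show ?thesis using stp[OF nN] by simp
    qed
  qed
  show ?thesis unfolding eventually_sequentially
  proof (intro exI allI impI)
    fix n assume "n \<ge> m"
    then have "w n \<le> T" "\<bar>w n - y n\<bar> < \<eta>" using all N m by auto
    then show "y n \<le> a + \<delta>" using eta d by (simp add: T_def)
  qed
qed

lemma det_conv:
  fixes y W :: "nat \<Rightarrow> real" and a B :: real
  assumes conv: "(\<lambda>n. W n / real n - y n) \<longlonglongrightarrow> 0"
    and bnd: "\<And>n. \<bar>W (Suc n) - W n\<bar> \<le> B"
    and up: "\<And>\<delta>. \<delta> > 0 \<Longrightarrow> \<exists>c>0. eventually (\<lambda>n. y n \<ge> a + \<delta> \<longrightarrow> W (Suc n) - W n \<le> y n - c) sequentially"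
    and lo: "\<And>\<delta>. \<delta> > 0 \<Longrightarrow> \<exists>c>0. eventually (\<lambda>n. y n \<le> a - \<delta> \<longrightarrow> W (Suc n) - W n \<ge> y n + c) sequentially"
  shows "y \<longlonglongrightarrow> a"
proof (rule order_tendstoI)
  fix b assume ba: "a < b"
  then have "eventually (\<lambda>n. y n \<le> a + (b-a)/2) sequentially"
    using det_upper[OF conv _ up, of B "(b-a)/2"] bnd abs_le_D1 by auto
  then show "eventually (\<lambda>n. y n < b) sequentially"
    by (rule eventually_mono) (use ba in \<open>simp add: field_simps\<close>)
next
  fix b assume ab: "b < a"
  have conv': "(\<lambda>n. (- W n) / real n - (- y n)) \<longlonglongrightarrow> 0"
    using tendsto_minus[OF conv] by simp
  have bnd': "(- W (Suc n)) - (- W n) \<le> B" for n using bnd[of n] by linarith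
  have up': "\<exists>c>0. eventually (\<lambda>n. - y n \<ge> - a + \<delta> \<longrightarrow> (- W (Suc n)) - (- W n) \<le> - y n - c) sequentially"
    if dp: "\<delta> > 0" for \<delta>
  proof -
    obtain c where "c > 0" "eventually (\<lambda>n. y n \<le> a - \<delta> \<longrightarrow> W (Suc n) - W n \<ge> y n + c) sequentially"
      using lo[OF dp] by blast
    then show ?thesis by (intro exI[of _ c]) (auto elim: eventually_mono)
  qed
  have "eventually (\<lambda>n. - y n \<le> - a + (a-b)/2) sequentially"
    using det_upper[OF conv' bnd' up'] ab by auto
  then show "eventually (\<lambda>n. b < y n) sequentially"
    by (rule eventually_mono) (use ab in \<open>simp add: field_simps\<close>)
qed



lemma g_bounds:
  assumes p: "0 < p" "p < 1" and fx: "f x \<in> {0..1}"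
  shows "0 < g_fun p f x" "g_fun p f x < 1"
proof -
  have a: "g_fun p f x = p * f x + (1 - p) * (1 - f x)" by (simp add: g_fun_def)
  have f0: "0 \<le> f x" "f x \<le> 1" using fx by auto
  have "min p (1-p) * f x \<le> p * f x" using f0 by (intro mult_right_mono) auto
  moreover have "min p (1-p) * (1 - f x) \<le> (1-p) * (1 - f x)" using f0 by (intro mult_right_mono) auto
  ultimately have "min p (1-p) \<le> g_fun p f x" unfolding a by (simp add: algebra_simps)
  then show "0 < g_fun p f x" using p by linarith
  have "p * f x \<le> max p (1-p) * f x" using f0 by (intro mult_right_mono) auto
  moreover have "(1-p) * (1 - f x) \<le> max p (1-p) * (1 - f x)" using f0 by (intro mult_right_mono) auto
  ultimately have "g_fun p f x \<le> max p (1-p)" unfolding a by (simp add: algebra_simps)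
  then show "g_fun p f x < 1" using p by linarith
qed

lemma H_cont: "continuous_on S (H_fun k G)"
  unfolding H_fun_def by (intro continuous_intros)

lemma two_pow: "k \<ge> 1 \<Longrightarrow> 2 powr (1 - real k) * 2 ^ k = (2::real)"
proof -
  have "(2::real) powr (1 - real k) * 2 ^ k = 2 powr (1 - real k) * 2 powr (real k)"
    by (simp add: powr_realpow)
  also have "\<dots> = 2 powr 1" by (simp add: powr_add[symmetric])
  finally show ?thesis by simp
qed

lemma H_one: "k \<ge> 1 \<Longrightarrow> H_fun k G 1 = 2 * G 1 - 1"
proof -
  assume k: "k \<ge> 1"
  have "(\<Sum>i = 0..k. G (real i / real k) * real (k choose i) * (1 + 1) ^ i * (1 - 1::real) ^ (k - i))
      = G (real k / real k) * real (k choose k) * 2 ^ k * 0 ^ (k - k) +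
        (\<Sum>i = 0..<k. G (real i / real k) * real (k choose i) * (1 + 1) ^ i * (1 - 1::real) ^ (k - i))"
    by (subst sum.last_plus) auto
  also have "(\<Sum>i = 0..<k. G (real i / real k) * real (k choose i) * (1 + 1) ^ i * (1 - 1::real) ^ (k - i)) = 0"
    by (intro sum.neutral) auto
  finally show ?thesis using k two_pow[OF k] unfolding H_fun_def by (simp add: mult.commute mult.left_commute)
qed

lemma H_mone: "k \<ge> 1 \<Longrightarrow> H_fun k G (-1) = 2 * G 0 - 1"
proof -
  assume k: "k \<ge> 1"
  have "(\<Sum>i = 0..k. G (real i / real k) * real (k choose i) * (1 + -1::real) ^ i * (1 - -1) ^ (k - i))
      = G 0 * 1 * 1 * 2 ^ k +
        (\<Sum>i = Suc 0..k. G (real i / real k) * real (k choose i) * (1 + -1::real) ^ i * (1 - -1) ^ (k - i))"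
    by (subst sum.atLeast_Suc_atMost) auto
  also have "(\<Sum>i = Suc 0..k. G (real i / real k) * real (k choose i) * (1 + -1::real) ^ i * (1 - -1) ^ (k - i)) = 0"
    by (intro sum.neutral) auto
  finally show ?thesis using k two_pow[OF k] unfolding H_fun_def by (simp add: mult.commute mult.left_commute)
qed

lemma drift_up:
  fixes h :: "real \<Rightarrow> real"
  assumes cont: "continuous_on {-1..1} h" and h1: "h 1 < 1" and xs: "xs \<in> {-1..1}"
    and uniq: "\<forall>y\<in>{-1..1}. h y = y \<longrightarrow> y = xs" and d: "\<delta> > 0"
  shows "\<exists>c>0. \<forall>y\<in>{-1..1}. y \<ge> xs + \<delta> \<longrightarrow> h y \<le> y - c"
proof (cases "xs + \<delta> \<le> 1")
  case False
  then show ?thesis by (intro exI[of _ 1]) auto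
next
  case True
  have cK: "continuous_on {xs+\<delta>..1} (\<lambda>y. y - h y)"
    by (intro continuous_intros continuous_on_subset[OF cont]) (use xs d in auto)
  obtain y0 where y0: "y0 \<in> {xs+\<delta>..1}" and mn: "\<forall>y\<in>{xs+\<delta>..1}. y0 - h y0 \<le> y - h y"
    using continuous_attains_inf[OF compact_Icc _ cK] True by auto
  have pos: "y0 - h y0 > 0"
  proof (rule ccontr)
    assume "\<not> ?thesis"
    then have le: "y0 - h y0 \<le> 0" by simp
    have c1: "continuous_on {y0..1} (\<lambda>y. y - h y)"
      by (intro continuous_intros continuous_on_subset[OF cont]) (use y0 xs d in auto)
    obtain z where z: "y0 \<le> z" "z \<le> 1" "z - h z = 0"
      using IVT'[of "\<lambda>y. y - h y" y0 0 1, OF le _ _ c1] h1 y0 by auto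
    then have "z = xs" using uniq y0 xs d by auto
    then show False using z y0 d by auto
  qed
  show ?thesis
  proof (intro exI[of _ "y0 - h y0"] conjI ballI impI)
    fix y assume "y \<in> {-1..1}" "y \<ge> xs + \<delta>"
    then have "y \<in> {xs+\<delta>..1}" by auto
    then show "h y \<le> y - (y0 - h y0)" using mn by fastforce
  qed (use pos in auto)
qed

lemma drift_lo:
  fixes h :: "real \<Rightarrow> real"
  assumes cont: "continuous_on {-1..1} h" and h1: "h (-1) > -1" and xs: "xs \<in> {-1..1}"
    and uniq: "\<forall>y\<in>{-1..1}. h y = y \<longrightarrow> y = xs" and d: "\<delta> > 0"
  shows "\<exists>c>0. \<forall>y\<in>{-1..1}. y \<le> xs - \<delta> \<longrightarrow> h y \<ge> y + c"
proof (cases "xs - \<delta> \<ge> -1")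
  case False
  then show ?thesis by (intro exI[of _ 1]) auto
next
  case True
  have cK: "continuous_on {-1..xs-\<delta>} (\<lambda>y. h y - y)"
    by (intro continuous_intros continuous_on_subset[OF cont]) (use xs d in auto)
  obtain y0 where y0: "y0 \<in> {-1..xs-\<delta>}" and mn: "\<forall>y\<in>{-1..xs-\<delta>}. h y0 - y0 \<le> h y - y"
    using continuous_attains_inf[OF compact_Icc _ cK] True by auto
  have pos: "h y0 - y0 > 0"
  proof (rule ccontr)
    assume "\<not> ?thesis"
    then have le: "h y0 - y0 \<le> 0" by simp
    have c1: "continuous_on {-1..y0} (\<lambda>y. h y - y)"
      by (intro continuous_intros continuous_on_subset[OF cont]) (use y0 xs d in auto)
    obtain z where z: "-1 \<le> z" "z \<le> y0" "h z - z = 0"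
      using IVT2'[of "\<lambda>y. h y - y" y0 0 "-1", OF le _ _ c1] h1 y0 by auto
    then have "z = xs" using uniq y0 xs d by auto
    then show False using z y0 d by auto
  qed
  show ?thesis
  proof (intro exI[of _ "h y0 - y0"] conjI ballI impI)
    fix y assume "y \<in> {-1..1}" "y \<le> xs - \<delta>"
    then have "y \<in> {-1..xs-\<delta>}" by auto
    then show "h y \<ge> y + (h y0 - y0)" using mn by fastforce
  qed (use pos in auto)
qed

lemma fix_exists:
  fixes h :: "real \<Rightarrow> real"
  assumes cont: "continuous_on {-1..1} h" and h1: "h 1 < 1" and hm1: "h (-1) > -1"
  shows "\<exists>z\<in>{-1<..<1}. h z = z"
proof -
  have c: "continuous_on {-1..1} (\<lambda>y. y - h y)" by (intro continuous_intros cont)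
  obtain z where z: "-1 \<le> z" "z \<le> 1" "z - h z = 0"
    using IVT'[of "\<lambda>y. y - h y" "-1" 0 1, OF _ _ _ c] h1 hm1 by auto
  then have "z \<noteq> 1" "z \<noteq> -1" using h1 hm1 by auto
  then show ?thesis using z by (intro bexI[of _ z]) auto
qed

lemma neg_near_one:
  fixes h :: "real \<Rightarrow> real"
  assumes cont: "continuous_on {-1..1} h" and h1: "h 1 < 1" and b: "b < 1"
  shows "\<exists>v. b < v \<and> v < 1 \<and> h v < v"
proof -
  have "((\<lambda>y. h y - y) \<longlongrightarrow> h 1 - 1) (at 1 within {-1..1})"
    using cont by (intro tendsto_intros) (auto simp: continuous_on_def)
  then have "eventually (\<lambda>y. h y - y < 0) (at 1 within {-1..1})"
    using h1 by (intro order_tendstoD) auto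
  then obtain d where d: "d > 0" and dd: "\<forall>x\<in>{-1..1}. x \<noteq> 1 \<and> dist x 1 < d \<longrightarrow> h x - x < 0"
    unfolding eventually_at by blast
  define v where "v = max (max ((b + 1)/2) (1 - d/2)) 0"
  have v: "b < v" "v < 1" "0 \<le> v" "1 - v < d" using b d unfolding v_def by (auto split: split_max)
  have "h v - v < 0" using dd[rule_format, of v] v d by (auto simp: dist_real_def)
  then show ?thesis using v by (intro exI[of _ v]) auto
qed

lemma pos_near_mone:
  fixes h :: "real \<Rightarrow> real"
  assumes cont: "continuous_on {-1..1} h" and h1: "h (-1) > -1" and b: "b > -1"
  shows "\<exists>v. v < b \<and> -1 < v \<and> h v > v"
proof -
  have "((\<lambda>y. h y - y) \<longlongrightarrow> h (-1) - (-1)) (at (-1) within {-1..1})"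
    using cont by (intro tendsto_intros) (auto simp: continuous_on_def)
  then have "eventually (\<lambda>y. h y - y > 0) (at (-1) within {-1..1})"
    using h1 by (intro order_tendstoD) auto
  then obtain d where d: "d > 0" and dd: "\<forall>x\<in>{-1..1}. x \<noteq> -1 \<and> dist x (-1) < d \<longrightarrow> h x - x > 0"
    unfolding eventually_at by blast
  define v where "v = min (min ((b - 1)/2) (-1 + d/2)) 0"
  have v: "v < b" "-1 < v" "v \<le> 0" "v + 1 < d" using b d unfolding v_def by (auto split: split_min)
  have "h v - v > 0" using dd[rule_format, of v] v d by (auto simp: dist_real_def)
  then show ?thesis using v by (intro exI[of _ v]) auto
qed

lemma uniq_lt:
  fixes h :: "real \<Rightarrow> real"
  assumes cont: "continuous_on {-1..1} h" and h1: "h 1 < 1" and hm1: "h (-1) > -1"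
    and B: "strict_antimono_on {-1<..<1} h \<or> strictly_convex_on {-1<..<1} h
          \<or> strictly_concave_on {-1<..<1} h \<or> contraction_on {-1<..<1} h"
    and a: "a \<in> {-1<..<1}" "h a = a" and b: "b \<in> {-1<..<1}" "h b = b" and ab: "a < b"
  shows False
  using B
proof (elim disjE)
  assume "strict_antimono_on {-1<..<1} h"
  then have "h b < h a" using a b ab unfolding monotone_on_def by blast
  then show False using a b ab by simp
next
  assume "contraction_on {-1<..<1} h"
  then obtain c where c: "c < 1" and cc: "\<bar>h a - h b\<bar> \<le> c * \<bar>a - b\<bar>"
    using a b unfolding contraction_on_def by blast
  then have "\<bar>a - b\<bar> \<le> c * \<bar>a - b\<bar>" using a b by simp
  then have "(1 - c) * \<bar>a - b\<bar> \<le> 0" by (simp add: algebra_simps)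
  moreover have "(1 - c) * \<bar>a - b\<bar> > 0" using c ab by simp
  ultimately show False by simp
next
  assume cv: "strictly_convex_on {-1<..<1} h"
  obtain v where v: "b < v" "v < 1" "h v < v" using neg_near_one[OF cont h1] b by auto
  define t where "t = (v - b) / (v - a)"
  have t: "0 < t" "t < 1" using v ab by (auto simp: t_def field_simps)
  have nz: "v - a \<noteq> 0" using v ab by simp
  have "t * (v - a) = v - b" using nz by (simp add: t_def)
  moreover have "t * a + (1 - t) * v = v - t * (v - a)" by (simp add: algebra_simps)
  ultimately have tb: "t * a + (1 - t) * v = b" by simp
  have "h (t * a + (1 - t) * v) < t * h a + (1 - t) * h v"
    using cv a b v t ab unfolding strictly_convex_on_def
    by (intro cv[unfolded strictly_convex_on_def, rule_format]) auto
  also have "\<dots> < t * a + (1 - t) * v" using a v t by (simp add: mult_strict_left_mono)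
  finally show False using tb b by simp
next
  assume cv: "strictly_concave_on {-1<..<1} h"
  obtain u where u: "u < a" "-1 < u" "h u > u" using pos_near_mone[OF cont hm1] a by auto
  define t where "t = (b - a) / (b - u)"
  have t: "0 < t" "t < 1" using u ab by (auto simp: t_def field_simps)
  have nz: "b - u \<noteq> 0" using u ab by simp
  have "t * (b - u) = b - a" using nz by (simp add: t_def)
  moreover have "t * u + (1 - t) * b = b - t * (b - u)" by (simp add: algebra_simps)
  ultimately have ta: "t * u + (1 - t) * b = a" by simp
  have "- h (t * u + (1 - t) * b) < t * (- h u) + (1 - t) * (- h b)"
    by (intro cv[unfolded strictly_concave_on_def strictly_convex_on_def, rule_format]) (use a b u t ab in auto)
  also have "\<dots> < t * (- u) + (1 - t) * (- b)" using b u t by (simp add: mult_strict_left_mono)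
  finally show False using ta a by (simp add: algebra_simps)
qed

lemma uniq_B:
  fixes h :: "real \<Rightarrow> real"
  assumes cont: "continuous_on {-1..1} h" and h1: "h 1 < 1" and hm1: "h (-1) > -1"
    and B: "strict_antimono_on {-1<..<1} h \<or> strictly_convex_on {-1<..<1} h
          \<or> strictly_concave_on {-1<..<1} h \<or> contraction_on {-1<..<1} h"
    and a: "a \<in> {-1<..<1}" "h a = a" and b: "b \<in> {-1<..<1}" "h b = b"
  shows "a = b"
  using uniq_lt[OF cont h1 hm1 B a b] uniq_lt[OF cont h1 hm1 B b a] by (cases a b rule: linorder_cases) auto



lemma pascal_sum:
  fixes \<Phi> :: "nat \<Rightarrow> real" and m r :: real
  shows "(\<Sum>j\<le>K. (m * \<Phi> (Suc j) + r * \<Phi> j) * real (K choose j) * m ^ j * r ^ (K - j))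
       = (\<Sum>j\<le>Suc K. \<Phi> j * real (Suc K choose j) * m ^ j * r ^ (Suc K - j))"
proof -
  define f where "f j = \<Phi> j * real (K choose j) * m ^ j * r ^ (Suc K - j)" for j
  have A: "(\<Sum>j\<le>K. f j) = f 0 + (\<Sum>j\<le>K. f (Suc j))"
  proof -
    have "(\<Sum>j\<le>Suc K. f j) = f 0 + (\<Sum>j\<le>K. f (Suc j))" by (rule sum.atMost_Suc_shift)
    moreover have "(\<Sum>j\<le>Suc K. f j) = (\<Sum>j\<le>K. f j) + f (Suc K)" by simp
    moreover have "f (Suc K) = 0" by (simp add: f_def)
    ultimately show ?thesis by simp
  qed
  have "(\<Sum>j\<le>Suc K. \<Phi> j * real (Suc K choose j) * m ^ j * r ^ (Suc K - j))
      = \<Phi> 0 * r ^ Suc K + (\<Sum>j\<le>K. \<Phi> (Suc j) * real (Suc K choose Suc j) * m ^ Suc j * r ^ (K - j))"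
    by (subst sum.atMost_Suc_shift) simp
  also have "(\<Sum>j\<le>K. \<Phi> (Suc j) * real (Suc K choose Suc j) * m ^ Suc j * r ^ (K - j))
      = (\<Sum>j\<le>K. \<Phi> (Suc j) * real (K choose j) * m ^ Suc j * r ^ (K - j))
        + (\<Sum>j\<le>K. f (Suc j))"
    by (simp add: f_def sum.distrib[symmetric] algebra_simps)
  also have "\<Phi> 0 * r ^ Suc K + ((\<Sum>j\<le>K. \<Phi> (Suc j) * real (K choose j) * m ^ Suc j * r ^ (K - j))
        + (\<Sum>j\<le>K. f (Suc j)))
      = (\<Sum>j\<le>K. \<Phi> (Suc j) * real (K choose j) * m ^ Suc j * r ^ (K - j)) + (\<Sum>j\<le>K. f j)"
    using A by (simp add: f_def)
  also have "\<dots> = (\<Sum>j\<le>K. (m * \<Phi> (Suc j) + r * \<Phi> j) * real (K choose j) * m ^ j * r ^ (K - j))"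
    unfolding sum.distrib[symmetric]
  proof (intro sum.cong refl)
    fix j assume "j \<in> {..K}"
    then have "Suc K - j = Suc (K - j)" by auto
    then show "\<Phi> (Suc j) * real (K choose j) * m ^ Suc j * r ^ (K - j) + f j
        = (m * \<Phi> (Suc j) + r * \<Phi> j) * real (K choose j) * m ^ j * r ^ (K - j)"
      by (simp add: f_def algebra_simps)
  qed
  finally show ?thesis by simp
qed

lemma sum_if_count:
  fixes a b :: real
  assumes "finite B"
  shows "(\<Sum>y\<in>B. if y \<in> P then a else b) = real (card (B \<inter> P)) * a + real (card (B - P)) * b"
proof -
  have "(\<Sum>y\<in>B. if y \<in> P then a else b) = (\<Sum>y\<in>B \<inter> {y. y \<in> P}. a) + (\<Sum>y\<in>B \<inter> - {y. y \<in> P}. b)"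
    using assms by (rule sum.If_cases)
  also have "B \<inter> {y. y \<in> P} = B \<inter> P" by auto
  also have "B \<inter> - {y. y \<in> P} = B - P" by auto
  finally show ?thesis by simp
qed

lemma count_PiE:
  fixes \<Phi> :: "nat \<Rightarrow> real"
  assumes I: "finite I" and B: "finite B"
  shows "(\<Sum>t\<in>PiE I (\<lambda>_. B). \<Phi> (card {i\<in>I. t i \<in> P}))
       = (\<Sum>j\<le>card I. \<Phi> j * real (card I choose j) * real (card (B \<inter> P)) ^ j * real (card (B - P)) ^ (card I - j))"
  using I
proof (induction I arbitrary: \<Phi> rule: finite_induct)
  case empty
  then show ?case by simp
next
  case (insert x A)
  define m where "m = real (card (B \<inter> P))"
  define r where "r = real (card (B - P))"
  define c where "c g = card {i\<in>A. g i \<in> P}" for g :: "'a \<Rightarrow> 'b"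
  have cardeq: "card {i\<in>insert x A. (g(x := y)) i \<in> P} = c g + (if y \<in> P then 1 else 0)" for g y
  proof -
    have "{i\<in>insert x A. (g(x := y)) i \<in> P} = (if y \<in> P then insert x {i\<in>A. g i \<in> P} else {i\<in>A. g i \<in> P})"
      using insert.hyps by auto
    then show ?thesis using insert.hyps by (simp add: c_def)
  qed
  have "(\<Sum>t\<in>PiE (insert x A) (\<lambda>_. B). \<Phi> (card {i\<in>insert x A. t i \<in> P}))
      = (\<Sum>(y,g)\<in>B \<times> PiE A (\<lambda>_. B). \<Phi> (card {i\<in>insert x A. (g(x := y)) i \<in> P}))"
    using insert.hyps
    by (intro sum.reindex_bij_witness[of _ "\<lambda>(y,g). g(x := y)" "\<lambda>g. (g x, g(x := undefined))"])
       (auto simp: PiE_def extensional_def intro!: arg_cong[of _ _ "\<lambda>S. \<Phi> (card S)"])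
  also have "\<dots> = (\<Sum>(y,g)\<in>B \<times> PiE A (\<lambda>_. B). \<Phi> (c g + (if y \<in> P then 1 else 0)))"
    by (intro sum.cong refl) (auto simp only: split_beta cardeq)
  also have "\<dots> = (\<Sum>y\<in>B. \<Sum>g\<in>PiE A (\<lambda>_. B). \<Phi> (c g + (if y \<in> P then 1 else 0)))"
    by (subst sum.cartesian_product) auto
  also have "\<dots> = (\<Sum>g\<in>PiE A (\<lambda>_. B). \<Sum>y\<in>B. \<Phi> (c g + (if y \<in> P then 1 else 0)))"
    by (rule sum.swap)
  also have "\<dots> = (\<Sum>g\<in>PiE A (\<lambda>_. B). m * \<Phi> (Suc (c g)) + r * \<Phi> (c g))"
  proof (intro sum.cong refl)
    fix g
    have "(\<Sum>y\<in>B. \<Phi> (c g + (if y \<in> P then 1 else 0))) = (\<Sum>y\<in>B. if y \<in> P then \<Phi> (Suc (c g)) else \<Phi> (c g))"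
      by (intro sum.cong) auto
    also have "\<dots> = m * \<Phi> (Suc (c g)) + r * \<Phi> (c g)"
      using sum_if_count[OF B] by (simp add: m_def r_def)
    finally show "(\<Sum>y\<in>B. \<Phi> (c g + (if y \<in> P then 1 else 0))) = m * \<Phi> (Suc (c g)) + r * \<Phi> (c g)" .
  qed
  also have "\<dots> = (\<Sum>j\<le>card A. (m * \<Phi> (Suc j) + r * \<Phi> j) * real (card A choose j) * m ^ j * r ^ (card A - j))"
    using insert.IH[of "\<lambda>j. m * \<Phi> (Suc j) + r * \<Phi> j"] by (simp add: c_def m_def r_def)
  also have "\<dots> = (\<Sum>j\<le>Suc (card A). \<Phi> j * real (Suc (card A) choose j) * m ^ j * r ^ (Suc (card A) - j))"
    by (rule pascal_sum)
  finally show ?case using insert.hyps by (simp add: m_def r_def)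
qed

lemma avg_diff:
  fixes \<phi> :: "'a \<Rightarrow> real"
  assumes U: "finite U" and TU: "T \<subseteq> U" and T: "T \<noteq> {}" and phi: "\<And>u. u \<in> U \<Longrightarrow> 0 \<le> \<phi> u \<and> \<phi> u \<le> 1"
  shows "\<bar>sum \<phi> T / card T - sum \<phi> U / card U\<bar> \<le> 1 - card T / card U"
proof -
  have fT: "finite T" using U TU finite_subset by blast
  have cT: "card T > 0" using fT T by (simp add: card_gt_0_iff)
  have cTU: "card T \<le> card U" using U TU by (rule card_mono)
  have cU: "card U > 0" using cT cTU by simp
  define s where "s = sum \<phi> T"
  define e where "e = sum \<phi> (U - T)"
  have sU: "sum \<phi> U = s + e" unfolding s_def e_def using U TU
    by (metis add.commute sum.subset_diff)
  have s0: "0 \<le> s" unfolding s_def using phi TU by (intro sum_nonneg) auto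
  have s1: "s \<le> card T" unfolding s_def using phi TU
    using sum_bounded_above[of T \<phi> 1] by auto
  have e0: "0 \<le> e" unfolding e_def using phi by (intro sum_nonneg) auto
  have e1: "e \<le> real (card U) - card T" unfolding e_def
    using sum_bounded_above[of "U - T" \<phi> 1] phi card_Diff_subset[OF fT TU] cTU
    by (auto simp: of_nat_diff)
  define a where "a = real (card T)"
  define b where "b = real (card U)"
  have ab: "0 < a" "a \<le> b" using cT cTU by (auto simp: a_def b_def)
  have "s / a - (s + e) / b = (s / a) * ((b - a) / b) - e / b"
    using ab by (simp add: field_simps)
  moreover have q: "0 \<le> s / a" "s / a \<le> 1" using ab s0 s1 by (auto simp: a_def)
  moreover have w: "0 \<le> (b - a) / b" using ab by simp
  moreover have "0 \<le> (s / a) * ((b - a) / b)" using mult_nonneg_nonneg[OF q(1) w] .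
  moreover have "(s / a) * ((b - a) / b) \<le> (b - a) / b"
    using mult_left_le_one_le[OF w q] .
  moreover have "0 \<le> e / b" "e / b \<le> (b - a) / b" using e0 e1 ab by (auto simp: a_def b_def divide_right_mono)
  ultimately have "\<bar>s / a - (s + e) / b\<bar> \<le> (b - a) / b" by linarith
  also have "(b - a) / b = 1 - a / b" using ab by (simp add: field_simps)
  finally show ?thesis by (simp add: sU s_def a_def b_def)
qed

lemma card_tuples: "n \<ge> k \<Longrightarrow> real (card (tuples k n)) = (\<Prod>l<k. real n - real l)"
proof -
  have "card (tuples k n) = card {1..n} ^ (card {0..<k} - card {0..<k}) * prod ((-) (card {1..n})) {0 ..< card {0..<k}}"
    unfolding tuples_def by (rule card_inj_on_subset_funcset) auto
  then have "card (tuples k n) = (\<Prod>l\<in>{0..<k}. n - l)" by simp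
  moreover assume "n \<ge> k"
  ultimately show ?thesis by (simp add: of_nat_prod of_nat_diff lessThan_atLeast0)
qed

lemma eps_tends: "(\<lambda>n. 2 * (1 - (\<Prod>l<k. 1 - real l / real n))) \<longlonglongrightarrow> 0"
proof -
  have "(\<lambda>n. (\<Prod>l<k. 1 - real l / real n)) \<longlonglongrightarrow> (\<Prod>l<k. 1 - 0)"
    by (intro tendsto_prod tendsto_diff tendsto_const lim_const_over_n)
  then have "(\<lambda>n. 2 * (1 - (\<Prod>l<k. 1 - real l / real n))) \<longlonglongrightarrow> 2 * (1 - 1)"
    by (intro tendsto_intros) simp
  then show ?thesis by simp
qed

lemma samp_approx:
  fixes G :: "real \<Rightarrow> real" and x :: "nat \<Rightarrow> real"
  assumes k: "k \<ge> 1" and G01: "\<And>j. j \<le> k \<Longrightarrow> 0 \<le> G (real j / real k) \<and> G (real j / real k) \<le> 1"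
    and n: "n \<ge> k" and x: "\<And>i. i \<in> {1..n} \<Longrightarrow> x i = 1 \<or> x i = -1"
  shows "\<bar>2 * samp_prob k n G x - 1 - H_fun k G ((\<Sum>i=1..n. x i) / real n)\<bar>
          \<le> 2 * (1 - (\<Prod>l<k. 1 - real l / real n))"
proof -
  define U where "U = {0..<k} \<rightarrow>\<^sub>E {1..n}"
  define T where "T = tuples k n"
  define P where "P = {j. x j = 1}"
  define \<phi> where "\<phi> t = G (real (card {i \<in> {0..<k}. x (t i) = 1}) / real k)" for t
  have npos: "n > 0" using k n by simp
  have fU: "finite U" unfolding U_def by (intro finite_PiE) auto
  have TU: "T \<subseteq> U" unfolding T_def U_def tuples_def by auto
  have cT: "real (card T) = (\<Prod>l<k. real n - real l)" unfolding T_def using n by (rule card_tuples)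
  have cTpos: "real (card T) > 0" unfolding cT using n by (intro prod_pos) auto
  then have Tne: "T \<noteq> {}" by auto
  have cU: "card U = n ^ k" unfolding U_def by (simp add: card_PiE)
  have phi: "0 \<le> \<phi> t \<and> \<phi> t \<le> 1" if "t \<in> U" for t
  proof -
    have "card {i \<in> {0..<k}. x (t i) = 1} \<le> card {0..<k}" by (intro card_mono) auto
    then show ?thesis unfolding \<phi>_def using G01 by auto
  qed
  have samp: "samp_prob k n G x = sum \<phi> T / card T"
    unfolding samp_prob_def T_def \<phi>_def by simp
  define m where "m = real (card ({1..n} \<inter> P))"
  define r where "r = real (card ({1..n} - P))"
  have sumU: "sum \<phi> U = (\<Sum>j\<le>k. G (real j / real k) * real (k choose j) * m ^ j * r ^ (k - j))"
  proof -
    have "sum \<phi> U = (\<Sum>t\<in>U. (\<lambda>j. G (real j / real k)) (card {i\<in>{0..<k}. t i \<in> P}))"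
      unfolding \<phi>_def P_def by simp
    also have "\<dots> = (\<Sum>j\<le>card {0..<k}. G (real j / real k) * real (card {0..<k} choose j) * m ^ j * r ^ (card {0..<k} - j))"
      unfolding U_def m_def r_def by (rule count_PiE) auto
    finally show ?thesis by simp
  qed
  have sx: "(\<Sum>i=1..n. x i) = m - r"
  proof -
    have "(\<Sum>i=1..n. x i) = (\<Sum>i\<in>{1..n}. if i \<in> P then 1 else -1)"
      using x by (intro sum.cong) (auto simp: P_def)
    also have "\<dots> = m - r" using sum_if_count[of "{1..n}" P 1 "-1"] by (simp add: m_def r_def)
    finally show ?thesis .
  qed
  have mr: "m + r = real n"
  proof -
    have "(\<Sum>i\<in>{1..n}. if i \<in> P then 1 else 1) = m * 1 + r * (1::real)"
      using sum_if_count[of "{1..n}" P 1 1] by (simp add: m_def r_def)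
    then show ?thesis by simp
  qed
  have H: "H_fun k G ((\<Sum>i=1..n. x i) / real n) = 2 * (sum \<phi> U / card U) - 1"
  proof -
    have y1: "1 + (m - r) / real n = 2 * m / real n" and y2: "1 - (m - r) / real n = 2 * r / real n"
      using mr npos by (auto simp: field_simps)
    have trm: "(2 * m / real n) ^ i * (2 * r / real n) ^ (k - i) = 2 ^ k * (m ^ i * r ^ (k - i)) / real n ^ k"
      if "i \<le> k" for i
    proof -
      have "(2 * m / real n) ^ i * (2 * r / real n) ^ (k - i)
          = (2 ^ i * 2 ^ (k - i)) * (m ^ i * r ^ (k - i)) / (real n ^ i * real n ^ (k - i))"
        by (simp add: power_divide power_mult_distrib)
      also have "2 ^ i * 2 ^ (k - i) = (2::real) ^ k" using that by (simp add: power_add[symmetric])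
      also have "real n ^ i * real n ^ (k - i) = real n ^ k" using that by (simp add: power_add[symmetric])
      finally show ?thesis .
    qed
    have "(\<Sum>i = 0..k. G (real i / real k) * real (k choose i) * (1 + (m - r) / real n) ^ i * (1 - (m - r) / real n) ^ (k - i))
        = (\<Sum>i\<le>k. 2 ^ k / real n ^ k * (G (real i / real k) * real (k choose i) * m ^ i * r ^ (k - i)))"
      unfolding y1 y2 atLeast0AtMost
      by (intro sum.cong refl) (simp add: trm mult.assoc)
    also have "\<dots> = 2 ^ k / real n ^ k * sum \<phi> U" by (simp add: sumU sum_distrib_left)
    finally have "H_fun k G ((\<Sum>i=1..n. x i) / real n) = 2 powr (1 - real k) * 2 ^ k * (sum \<phi> U / real n ^ k) - 1"
      unfolding H_fun_def sx by simp
    also have "2 powr (1 - real k) * 2 ^ k = (2::real)"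
    proof -
      have "(2::real) powr (1 - real k) * 2 ^ k = 2 powr (1 - real k) * 2 powr (real k)"
        by (simp add: powr_realpow)
      also have "\<dots> = 2 powr 1" by (simp add: powr_add[symmetric])
      finally show ?thesis by simp
    qed
    finally show ?thesis using cU by simp
  qed
  have "\<bar>2 * samp_prob k n G x - 1 - H_fun k G ((\<Sum>i=1..n. x i) / real n)\<bar>
      = 2 * \<bar>sum \<phi> T / card T - sum \<phi> U / card U\<bar>"
  proof -
    have e: "2 * samp_prob k n G x - 1 - H_fun k G ((\<Sum>i=1..n. x i) / real n) = 2 * (sum \<phi> T / card T - sum \<phi> U / card U)"
      unfolding samp H by (simp add: algebra_simps)
    show ?thesis unfolding e abs_mult by simp
  qed
  also have "\<dots> \<le> 2 * (1 - card T / card U)"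
  proof -
    have "\<bar>sum \<phi> T / card T - sum \<phi> U / card U\<bar> \<le> 1 - card T / card U"
      by (rule avg_diff[OF fU TU Tne]) (rule phi)
    then show ?thesis by simp
  qed
  also have "card T / card U = (\<Prod>l<k. 1 - real l / real n)"
  proof -
    have "real (card T) / real (card U) = (\<Prod>l<k. real n - real l) / (\<Prod>l<k. real n)"
      unfolding cT cU by simp
    also have "\<dots> = (\<Prod>l<k. (real n - real l) / real n)" by (rule prod_dividef[symmetric])
    also have "\<dots> = (\<Prod>l<k. 1 - real l / real n)" using npos by (intro prod.cong) (auto simp: field_simps)
    finally show ?thesis .
  qed
  finally show ?thesis .
qed



lemma quartic_bound:
  fixes m d :: real
  assumes d: "\<bar>d\<bar> \<le> 2"
  shows "(m + d) ^ 4 \<le> m ^ 4 + 4 * (m ^ 3 * d) + 40 * m ^ 2 + 32"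
proof -
  have d2: "d ^ 2 \<le> 4" using d by (metis abs_le_square_iff power2_abs real_sqrt_four real_sqrt_le_iff real_sqrt_pow2 zero_le_numeral power2_eq_square abs_numeral)
  have e: "(m + d) ^ 4 = m ^ 4 + 4 * (m ^ 3 * d) + (6 * m ^ 2 * d ^ 2 + 4 * m * d ^ 3 + d ^ 4)"
    by (simp add: power2_eq_square power3_eq_cube eval_nat_numeral algebra_simps)
  have t1: "6 * m ^ 2 * d ^ 2 \<le> 24 * m ^ 2"
  proof -
    have "m ^ 2 * d ^ 2 \<le> m ^ 2 * 4" using d2 by (intro mult_left_mono) auto
    then show ?thesis by linarith
  qed
  have ad3: "\<bar>d ^ 3\<bar> \<le> 8"
  proof -
    have "\<bar>d\<bar> ^ 3 \<le> 2 ^ 3" using d by (intro power_mono) auto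
    then show ?thesis by (simp add: power_abs)
  qed
  have t2: "4 * m * d ^ 3 \<le> 16 * m ^ 2 + 16"
  proof -
    have "m * d ^ 3 \<le> \<bar>m\<bar> * \<bar>d ^ 3\<bar>" by (metis abs_ge_self abs_mult)
    also have "\<dots> \<le> \<bar>m\<bar> * 8" using ad3 by (intro mult_left_mono) auto
    also have "\<bar>m\<bar> * 8 \<le> 4 * m ^ 2 + 4"
    proof -
      have "0 \<le> (2 * \<bar>m\<bar> - 2) ^ 2" by simp
      then show ?thesis by (simp add: power2_eq_square algebra_simps)
    qed
    finally show ?thesis by simp
  qed
  have t3: "d ^ 4 \<le> 16"
  proof -
    have "d ^ 4 = (d ^ 2) ^ 2" by simp
    also have "\<dots> \<le> 4 ^ 2" using d2 by (intro power_mono) auto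
    finally show ?thesis by simp
  qed
  show ?thesis unfolding e using t1 t2 t3 by linarith
qed

lemma mart_slln:
  fixes M :: "'w measure" and F :: "nat \<Rightarrow> 'w measure" and D :: "nat \<Rightarrow> 'w \<Rightarrow> real"
  assumes prob: "prob_space M"
    and filt_sub: "\<forall>n. subalgebra M (F n)"
    and filt_mono: "\<forall>n m. n \<le> m \<longrightarrow> sets (F n) \<subseteq> sets (F m)"
    and Dmeas: "\<And>j. D j \<in> borel_measurable (F (Suc j))"
    and Dbnd: "\<And>j \<omega>. \<omega> \<in> space M \<Longrightarrow> \<bar>D j \<omega>\<bar> \<le> 2"
    and Dorth: "\<And>j V C. V \<in> borel_measurable (F j) \<Longrightarrow> (\<And>\<omega>. \<omega> \<in> space M \<Longrightarrow> \<bar>V \<omega>\<bar> \<le> C)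
                  \<Longrightarrow> integral\<^sup>L M (\<lambda>\<omega>. V \<omega> * D j \<omega>) = 0"
  shows "AE \<omega> in M. (\<lambda>n. (\<Sum>j<n. D j \<omega>) / real n) \<longlonglongrightarrow> 0"
proof -
  interpret prob_space M by (rule prob)
  have sub: "subalgebra (F m) (F j)" if "j \<le> m" for j m
    using filt_sub filt_mono that unfolding subalgebra_def by auto
  have FM: "f \<in> borel_measurable (F j) \<Longrightarrow> f \<in> borel_measurable M" for f :: "'w \<Rightarrow> real" and j
    using measurable_from_subalg filt_sub by blast
  have bint: "integrable M f" if "f \<in> borel_measurable M" "\<And>\<omega>. \<omega> \<in> space M \<Longrightarrow> \<bar>f \<omega>\<bar> \<le> C" for f :: "'w \<Rightarrow> real" and C
    by (rule integrable_const_bound[of _ C]) (use that in auto)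
  define Mt where "Mt n \<omega> = (\<Sum>j<n. D j \<omega>)" for n \<omega>
  have DF: "D j \<in> borel_measurable (F m)" if "j < m" for j m
    using measurable_from_subalg[OF sub Dmeas] that by auto
  have MtF: "Mt n \<in> borel_measurable (F n)" for n
    unfolding Mt_def by (intro borel_measurable_sum) (auto intro: DF)
  have MtM[measurable]: "Mt n \<in> borel_measurable M" for n using FM[OF MtF] .
  have DM[measurable]: "D j \<in> borel_measurable M" for j using FM[OF Dmeas] .
  have Mtb: "\<bar>Mt n \<omega>\<bar> \<le> 2 * real n" if "\<omega> \<in> space M" for n \<omega>
  proof -
    have "\<bar>Mt n \<omega>\<bar> \<le> (\<Sum>j<n. \<bar>D j \<omega>\<bar>)" unfolding Mt_def by (rule sum_abs)
    also have "\<dots> \<le> (\<Sum>j<n. 2)" using Dbnd[OF that] by (intro sum_mono) auto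
    finally show ?thesis by simp
  qed
  have MtS: "Mt (Suc n) \<omega> = Mt n \<omega> + D n \<omega>" for n \<omega> by (simp add: Mt_def)
  have powb: "\<bar>Mt n \<omega> ^ i\<bar> \<le> (2 * real n) ^ i" if "\<omega> \<in> space M" for n i \<omega>
    using power_mono[OF Mtb[OF that] abs_ge_zero] by (simp add: power_abs)
  have intpow: "integrable M (\<lambda>\<omega>. Mt n \<omega> ^ i)" for n i
    by (rule bint[of _ "(2 * real n) ^ i"], simp, rule powb)
  have orth: "integral\<^sup>L M (\<lambda>\<omega>. Mt n \<omega> ^ i * D n \<omega>) = 0" for n i
    by (rule Dorth[of "\<lambda>\<omega>. Mt n \<omega> ^ i" n "(2 * real n) ^ i"], use MtF in simp, rule powb)
  have intMD: "integrable M (\<lambda>\<omega>. Mt n \<omega> ^ i * D n \<omega>)" for n i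
  proof (rule bint[of _ "(2 * real n) ^ i * 2"])
    fix \<omega> assume w: "\<omega> \<in> space M"
    show "\<bar>Mt n \<omega> ^ i * D n \<omega>\<bar> \<le> (2 * real n) ^ i * 2"
      unfolding abs_mult by (intro mult_mono powb w Dbnd) auto
  qed simp
  have intMD1: "integrable M (\<lambda>\<omega>. Mt n \<omega> * D n \<omega>)" for n using intMD[of n 1] by simp
  have orth1: "integral\<^sup>L M (\<lambda>\<omega>. Mt n \<omega> * D n \<omega>) = 0" for n using orth[of n 1] by simp
  have second: "integral\<^sup>L M (\<lambda>\<omega>. Mt n \<omega> ^ 2) \<le> 4 * real n" for n
  proof (induction n)
    case 0 then show ?case by (simp add: Mt_def)
  next
    case (Suc n)
    have "integral\<^sup>L M (\<lambda>\<omega>. Mt (Suc n) \<omega> ^ 2) \<le> integral\<^sup>L M (\<lambda>\<omega>. Mt n \<omega> ^ 2 + 2 * (Mt n \<omega> * D n \<omega>) + 4)"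
    proof (rule integral_mono)
      show "integrable M (\<lambda>\<omega>. Mt (Suc n) \<omega> ^ 2)" by (rule intpow)
      show "integrable M (\<lambda>\<omega>. Mt n \<omega> ^ 2 + 2 * (Mt n \<omega> * D n \<omega>) + 4)"
        by (intro Bochner_Integration.integrable_add integrable_mult_right intpow intMD1 integrable_const)
      fix \<omega> assume w: "\<omega> \<in> space M"
      have "D n \<omega> ^ 2 \<le> 2 ^ 2" using Dbnd[OF w, of n] by (metis abs_le_square_iff abs_numeral)
      then show "Mt (Suc n) \<omega> ^ 2 \<le> Mt n \<omega> ^ 2 + 2 * (Mt n \<omega> * D n \<omega>) + 4"
        unfolding MtS by (simp add: power2_eq_square algebra_simps)
    qed
    also have "\<dots> = integral\<^sup>L M (\<lambda>\<omega>. Mt n \<omega> ^ 2) + 2 * integral\<^sup>L M (\<lambda>\<omega>. Mt n \<omega> * D n \<omega>) + 4"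
      using intpow intMD1 by (simp add: prob_space)
    also have "\<dots> \<le> 4 * real (Suc n)" using Suc.IH orth1[of n] by simp
    finally show ?case .
  qed
  have fourth: "integral\<^sup>L M (\<lambda>\<omega>. Mt n \<omega> ^ 4) \<le> 100 * real n ^ 2" for n
  proof (induction n)
    case 0 then show ?case by (simp add: Mt_def)
  next
    case (Suc n)
    have "integral\<^sup>L M (\<lambda>\<omega>. Mt (Suc n) \<omega> ^ 4) \<le> integral\<^sup>L M (\<lambda>\<omega>. Mt n \<omega> ^ 4 + 4 * (Mt n \<omega> ^ 3 * D n \<omega>) + 40 * Mt n \<omega> ^ 2 + 32)"
    proof (rule integral_mono)
      show "integrable M (\<lambda>\<omega>. Mt (Suc n) \<omega> ^ 4)" by (rule intpow)
      show "integrable M (\<lambda>\<omega>. Mt n \<omega> ^ 4 + 4 * (Mt n \<omega> ^ 3 * D n \<omega>) + 40 * Mt n \<omega> ^ 2 + 32)"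
        by (intro Bochner_Integration.integrable_add integrable_mult_right intpow intMD integrable_const)
      fix \<omega> assume w: "\<omega> \<in> space M"
      show "Mt (Suc n) \<omega> ^ 4 \<le> Mt n \<omega> ^ 4 + 4 * (Mt n \<omega> ^ 3 * D n \<omega>) + 40 * Mt n \<omega> ^ 2 + 32"
        unfolding MtS by (rule quartic_bound[OF Dbnd[OF w]])
    qed
    also have "\<dots> = integral\<^sup>L M (\<lambda>\<omega>. Mt n \<omega> ^ 4) + 4 * integral\<^sup>L M (\<lambda>\<omega>. Mt n \<omega> ^ 3 * D n \<omega>)
        + 40 * integral\<^sup>L M (\<lambda>\<omega>. Mt n \<omega> ^ 2) + 32"
      using intpow intMD by (simp add: prob_space)
    also have "\<dots> \<le> 100 * real n ^ 2 + 40 * (4 * real n) + 32"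
      using Suc.IH orth[of n 3] second[of n] by simp
    also have "\<dots> \<le> 100 * real (Suc n) ^ 2" by (simp add: power2_eq_square algebra_simps)
    finally show ?case .
  qed
  define u where "u n \<omega> = (Mt n \<omega> / real n) ^ 4" for n \<omega>
  have u0: "0 \<le> u n \<omega>" for n \<omega> unfolding u_def by simp
  have uM[measurable]: "u n \<in> borel_measurable M" for n unfolding u_def by measurable
  have uint: "integrable M (u n)" for n
    unfolding u_def using intpow[of n 4] by (simp add: power_divide)
  define b where "b n = 100 * inverse (real n ^ 2)" for n
  have bs: "summable b" unfolding b_def by (intro summable_mult inverse_power_summable) auto
  have Eu: "integral\<^sup>L M (u n) \<le> b n" for n
  proof (cases "n = 0")
    case True
    have "u 0 = (\<lambda>\<omega>. 0)" by (auto simp: u_def)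
    then show ?thesis using True by (simp add: b_def)
  next
    case False
    have "integral\<^sup>L M (u n) = integral\<^sup>L M (\<lambda>\<omega>. Mt n \<omega> ^ 4) / real n ^ 4"
      unfolding u_def by (simp add: power_divide)
    also have "\<dots> \<le> 100 * real n ^ 2 / real n ^ 4" using fourth[of n] by (intro divide_right_mono) auto
    also have "\<dots> = b n" using False by (simp add: b_def field_simps eval_nat_numeral)
    finally show ?thesis .
  qed
  have "(\<integral>\<^sup>+ \<omega>. (\<Sum>n. ennreal (u n \<omega>)) \<partial>M) = (\<Sum>n. \<integral>\<^sup>+ \<omega>. ennreal (u n \<omega>) \<partial>M)"
    by (rule nn_integral_suminf) simp
  also have "\<dots> = (\<Sum>n. ennreal (integral\<^sup>L M (u n)))"
  proof (rule suminf_cong)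
    fix n show "(\<integral>\<^sup>+ \<omega>. ennreal (u n \<omega>) \<partial>M) = ennreal (integral\<^sup>L M (u n))"
      by (rule nn_integral_eq_integral[OF uint]) (simp add: u0)
  qed
  also have "\<dots> \<le> (\<Sum>n. ennreal (b n))"
    by (intro suminf_le ennreal_leI Eu) simp_all
  also have "\<dots> < \<top>"
  proof -
    have "(\<Sum>n. ennreal (b n)) \<noteq> \<top>" by (rule ennreal_suminf_neq_top[OF bs]) (simp add: b_def)
    then show ?thesis by (simp add: less_top)
  qed
  finally have fin: "(\<integral>\<^sup>+ \<omega>. (\<Sum>n. ennreal (u n \<omega>)) \<partial>M) \<noteq> \<infinity>" by simp
  have ae: "AE \<omega> in M. (\<Sum>n. ennreal (u n \<omega>)) \<noteq> \<infinity>"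
    by (rule nn_integral_PInf_AE[OF _ fin]) simp
  have pt: "(\<lambda>n. (\<Sum>j<n. D j \<omega>) / real n) \<longlonglongrightarrow> 0" if fin\<omega>: "(\<Sum>n. ennreal (u n \<omega>)) \<noteq> \<infinity>" for \<omega>
  proof -
    have "summable (\<lambda>n. u n \<omega>)" using summable_suminf_not_top[of "\<lambda>n. u n \<omega>", OF u0] fin\<omega> by simp
    then have "(\<lambda>n. u n \<omega>) \<longlonglongrightarrow> 0" by (rule summable_LIMSEQ_zero)
    then have "(\<lambda>n. root 4 (u n \<omega>)) \<longlonglongrightarrow> root 4 0" by (rule tendsto_real_root)
    moreover have "root 4 (u n \<omega>) = \<bar>Mt n \<omega> / real n\<bar>" for n
    proof -
      have "\<bar>Mt n \<omega> / real n\<bar> ^ 4 = (Mt n \<omega> / real n) ^ 4" by (rule power_even_abs) simp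
      then have "u n \<omega> = \<bar>Mt n \<omega> / real n\<bar> ^ 4" unfolding u_def by (rule sym)
      then show ?thesis using real_root_power_cancel[of 4 "\<bar>Mt n \<omega> / real n\<bar>"] by (simp only:)
    qed
    ultimately have "(\<lambda>n. \<bar>Mt n \<omega> / real n\<bar>) \<longlonglongrightarrow> 0" by (simp only: real_root_zero)
    then have "(\<lambda>n. Mt n \<omega> / real n) \<longlonglongrightarrow> 0" by (rule tendsto_rabs_zero_cancel)
    then show ?thesis unfolding Mt_def .
  qed
  show ?thesis using ae by (rule AE_mp) (intro AE_I2 impI pt)
qed



lemma Z_meas:
  fixes X :: "nat \<Rightarrow> 'w \<Rightarrow> real" and N :: "'w measure"
  assumes XN: "\<And>i. i \<le> n \<Longrightarrow> X i \<in> borel_measurable N"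
  shows "(\<lambda>\<omega>. samp_prob k n G (\<lambda>i. X i \<omega>)) \<in> borel_measurable N"
proof -
  have term_meas: "(\<lambda>\<omega>. G (real (card {i \<in> {0..<k}. X (t i) \<omega> = 1}) / real k)) \<in> borel_measurable N"
    if t: "t \<in> tuples k n" for t
  proof -
    have tin: "t i \<le> n" if "i < k" for i using t that unfolding tuples_def by (auto simp: PiE_def Pi_def)
    have sets: "{\<omega> \<in> space N. i \<in> {i \<in> {0..<k}. X (t i) \<omega> = 1}} \<in> sets N" for i
    proof (cases "i < k")
      case True
      have [measurable]: "X (t i) \<in> borel_measurable N" using XN tin True by auto
      have "{\<omega> \<in> space N. i \<in> {i \<in> {0..<k}. X (t i) \<omega> = 1}} = {\<omega> \<in> space N. X (t i) \<omega> = 1}"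
        using True by auto
      also have "\<dots> \<in> sets N" by measurable
      finally show ?thesis .
    next
      case False
      then show ?thesis by simp
    qed
    have c: "(\<lambda>\<omega>. card {i \<in> {0..<k}. X (t i) \<omega> = 1}) \<in> measurable N (count_space UNIV)"
      by (rule measurable_card) (rule sets)
    show ?thesis
      by (rule measurable_compose_countable[where f="\<lambda>j \<omega>. G (real j / real k)", OF _ c]) simp
  qed
  show ?thesis unfolding samp_prob_def
    by (intro borel_measurable_divide borel_measurable_sum borel_measurable_const term_meas)
qed

lemma Z_01:
  assumes G01: "\<And>j. j \<le> k \<Longrightarrow> 0 \<le> G (real j / real k) \<and> G (real j / real k) \<le> 1"
  shows "0 \<le> samp_prob k n G x \<and> samp_prob k n G x \<le> 1"
proof -
  define T where "T = tuples k n"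
  have fT: "finite T" unfolding T_def tuples_def
    by (rule finite_subset[of _ "{0..<k} \<rightarrow>\<^sub>E {1..n}"]) (auto intro: finite_PiE)
  have b: "0 \<le> G (real (card {i \<in> {0..<k}. x (t i) = 1}) / real k) \<and> G (real (card {i \<in> {0..<k}. x (t i) = 1}) / real k) \<le> 1" for t
  proof -
    have "card {i \<in> {0..<k}. x (t i) = 1} \<le> card {0..<k}" by (intro card_mono) auto
    then show ?thesis using G01 by auto
  qed
  have s0: "0 \<le> (\<Sum>t\<in>T. G (real (card {i \<in> {0..<k}. x (t i) = 1}) / real k))"
    using b by (intro sum_nonneg) auto
  have s1: "(\<Sum>t\<in>T. G (real (card {i \<in> {0..<k}. x (t i) = 1}) / real k)) \<le> real (card T)"
    using sum_bounded_above[of T "\<lambda>t. G (real (card {i \<in> {0..<k}. x (t i) = 1}) / real k)" 1] b by auto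
  show ?thesis unfolding samp_prob_def T_def[symmetric]
  proof
    show "0 \<le> (\<Sum>t\<in>T. G (real (card {i \<in> {0..<k}. x (t i) = 1}) / real k)) / real (card T)"
      using s0 by simp
    show "(\<Sum>t\<in>T. G (real (card {i \<in> {0..<k}. x (t i) = 1}) / real k)) / real (card T) \<le> 1"
    proof (cases "card T = 0")
      case True then show ?thesis by simp
    next
      case False then show ?thesis using s1 by (simp add: divide_le_eq)
    qed
  qed
qed

lemma orth_lemma:
  fixes M Fj :: "'w measure" and X' Z V :: "'w \<Rightarrow> real"
  assumes prob: "prob_space M" and sub: "subalgebra M Fj"
    and XM[measurable]: "X' \<in> borel_measurable M" and Xpm: "\<forall>\<omega>\<in>space M. X' \<omega> \<in> {-1, 1}"
    and ZF: "Z \<in> borel_measurable Fj" and Zb: "\<And>\<omega>. \<omega> \<in> space M \<Longrightarrow> 0 \<le> Z \<omega> \<and> Z \<omega> \<le> 1"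
    and step: "\<forall>A\<in>sets Fj. measure M (A \<inter> {\<omega>\<in>space M. X' \<omega> = 1}) = integral\<^sup>L M (\<lambda>\<omega>. indicator A \<omega> * Z \<omega>)"
    and VF: "V \<in> borel_measurable Fj" and Vb: "\<And>\<omega>. \<omega> \<in> space M \<Longrightarrow> \<bar>V \<omega>\<bar> \<le> C"
  shows "integral\<^sup>L M (\<lambda>\<omega>. V \<omega> * (X' \<omega> - (2 * Z \<omega> - 1))) = 0"
proof -
  interpret prob_space M by (rule prob)
  have sfs: "sigma_finite_subalgebra M Fj"
    by (rule finite_measure_subalgebra_is_sigma_finite)
       (simp add: finite_measure_subalgebra_def finite_measure_subalgebra_axioms_def sub finite_measure_axioms)
  have ZM[measurable]: "Z \<in> borel_measurable M" using measurable_from_subalg[OF sub ZF] .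
  have VM[measurable]: "V \<in> borel_measurable M" using measurable_from_subalg[OF sub VF] .
  define B where "B = {\<omega>\<in>space M. X' \<omega> = 1}"
  have BM[measurable]: "B \<in> sets M" unfolding B_def by measurable
  define Y where "Y = (indicator B :: 'w \<Rightarrow> real)"
  have YM[measurable]: "Y \<in> borel_measurable M" unfolding Y_def by measurable
  have bint: "integrable M f" if "f \<in> borel_measurable M" "\<And>\<omega>. \<omega> \<in> space M \<Longrightarrow> \<bar>f \<omega>\<bar> \<le> K" for f :: "'w \<Rightarrow> real" and K
    by (rule integrable_const_bound[of _ K]) (use that in auto)
  have Yint: "integrable M Y" unfolding Y_def by (rule bint[of _ 1]) (auto simp: indicator_def)
  have Zint: "integrable M Z" by (rule bint[of _ 1]) (use Zb in auto)
  have charact: "AE x in M. real_cond_exp M Fj Y x = Z x"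
  proof (rule sigma_finite_subalgebra.real_cond_exp_charact[OF sfs _ Yint Zint ZF])
    fix A assume A: "A \<in> sets Fj"
    then have AM: "A \<in> sets M" using sub unfolding subalgebra_def by auto
    then have As: "A \<subseteq> space M" using sets.sets_into_space by auto
    have "(\<integral>x\<in>A. Y x \<partial>M) = integral\<^sup>L M (indicator (A \<inter> B))"
      unfolding set_lebesgue_integral_def Y_def by (intro Bochner_Integration.integral_cong) (auto simp: indicator_def)
    also have "\<dots> = measure M (A \<inter> B)" using AM BM by (simp add: Int_absorb2 As inf.absorb1 le_infI1)
    also have "\<dots> = integral\<^sup>L M (\<lambda>\<omega>. indicator A \<omega> * Z \<omega>)" using step A unfolding B_def by auto
    also have "\<dots> = (\<integral>x\<in>A. Z x \<partial>M)" unfolding set_lebesgue_integral_def by simp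
    finally show "(\<integral>x\<in>A. Y x \<partial>M) = (\<integral>x\<in>A. Z x \<partial>M)" .
  qed
  obtain \<omega>0 where "\<omega>0 \<in> space M" using not_empty by blast
  then have C0: "0 \<le> C" using Vb[of \<omega>0] by linarith
  have VYint: "integrable M (\<lambda>\<omega>. V \<omega> * Y \<omega>)"
    by (rule bint[of _ C]) (auto simp: Y_def indicator_def abs_mult C0 intro: Vb)
  have VZint: "integrable M (\<lambda>\<omega>. V \<omega> * Z \<omega>)"
  proof (rule bint[of _ C])
    fix \<omega> assume w: "\<omega> \<in> space M"
    have "\<bar>V \<omega> * Z \<omega>\<bar> \<le> C * 1" unfolding abs_mult using Vb[OF w] Zb[OF w]
      by (intro mult_mono) auto
    then show "\<bar>V \<omega> * Z \<omega>\<bar> \<le> C" by simp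
  qed simp
  have "integral\<^sup>L M (\<lambda>\<omega>. V \<omega> * Y \<omega>) = integral\<^sup>L M (\<lambda>\<omega>. V \<omega> * real_cond_exp M Fj Y \<omega>)"
    using sigma_finite_subalgebra.real_cond_exp_intg(2)[OF sfs VYint VF YM] by simp
  also have "\<dots> = integral\<^sup>L M (\<lambda>\<omega>. V \<omega> * Z \<omega>)"
    by (rule integral_cong_AE) (use charact in auto)
  finally have eq: "integral\<^sup>L M (\<lambda>\<omega>. V \<omega> * Y \<omega>) = integral\<^sup>L M (\<lambda>\<omega>. V \<omega> * Z \<omega>)" .
  have "integral\<^sup>L M (\<lambda>\<omega>. V \<omega> * (X' \<omega> - (2 * Z \<omega> - 1))) = integral\<^sup>L M (\<lambda>\<omega>. 2 * (V \<omega> * Y \<omega> - V \<omega> * Z \<omega>))"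
  proof (rule Bochner_Integration.integral_cong[OF refl])
    fix \<omega> assume w: "\<omega> \<in> space M"
    have "X' \<omega> = 2 * Y \<omega> - 1" using Xpm w by (auto simp: Y_def B_def indicator_def)
    then show "V \<omega> * (X' \<omega> - (2 * Z \<omega> - 1)) = 2 * (V \<omega> * Y \<omega> - V \<omega> * Z \<omega>)" by (simp add: algebra_simps)
  qed
  also have "\<dots> = 2 * (integral\<^sup>L M (\<lambda>\<omega>. V \<omega> * Y \<omega>) - integral\<^sup>L M (\<lambda>\<omega>. V \<omega> * Z \<omega>))"
    using VYint VZint by simp
  also have "\<dots> = 0" using eq by simp
  finally show ?thesis .
qed

lemma main_conv:
  fixes M :: "'w measure" and F :: "nat \<Rightarrow> 'w measure"
    and X :: "nat \<Rightarrow> 'w \<Rightarrow> real"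
    and p :: real and k :: nat and f :: "real \<Rightarrow> real" and xs :: real
  assumes prob: "prob_space M"
    and p: "0 < p" "p < 1"
    and k: "k \<ge> 1"
    and f: "\<forall>x\<in>{0..1}. f x \<in> {0..1}"
    and filt_sub: "\<forall>n. subalgebra M (F n)"
    and filt_mono: "\<forall>n m. n \<le> m \<longrightarrow> sets (F n) \<subseteq> sets (F m)"
    and adapted: "\<forall>n. X n \<in> borel_measurable (F n)"
    and Xpm: "\<forall>n\<ge>1. \<forall>\<omega>\<in>space M. X n \<omega> \<in> {-1, 1}"
    and step: "\<forall>n\<ge>k. \<forall>A\<in>sets (F n).
        measure M (A \<inter> {\<omega>\<in>space M. X (Suc n) \<omega> = 1}) =
        integral\<^sup>L M (\<lambda>\<omega>. indicator A \<omega> * samp_prob k n (g_fun p f) (\<lambda>i. X i \<omega>))"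
    and xs: "xs \<in> {-1..1}"
    and uniq: "\<forall>y\<in>{-1..1}. H_fun k (g_fun p f) y = y \<longrightarrow> y = xs"
  shows "AE \<omega> in M. (\<lambda>n. (\<Sum>i=1..n. X i \<omega>) / real n) \<longlonglongrightarrow> xs"
proof -
  interpret prob_space M by (rule prob)
  define G where "G = g_fun p f"
  define H where "H = H_fun k G"
  define Z where "Z n \<omega> = samp_prob k n G (\<lambda>i. X i \<omega>)" for n \<omega>
  define D where "D j \<omega> = (if k \<le> j then X (Suc j) \<omega> - (2 * Z j \<omega> - 1) else 0)" for j \<omega>
  have sub: "subalgebra (F m) (F j)" if "j \<le> m" for j m
    using filt_sub filt_mono that unfolding subalgebra_def by auto
  have XF: "X i \<in> borel_measurable (F n)" if "i \<le> n" for i n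
    using measurable_from_subalg[OF sub[OF that]] adapted by blast
  have XM: "X i \<in> borel_measurable M" for i
    using measurable_from_subalg filt_sub adapted by blast
  have G01: "0 \<le> G (real j / real k) \<and> G (real j / real k) \<le> 1" if "j \<le> k" for j
  proof -
    have "real j / real k \<in> {0..1}" using that k by auto
    then have "f (real j / real k) \<in> {0..1}" using f by blast
    then show ?thesis using g_bounds[OF p] unfolding G_def by (meson less_imp_le)
  qed
  have ZF: "Z n \<in> borel_measurable (F n)" for n
    unfolding Z_def by (rule Z_meas) (rule XF)
  have Zb: "0 \<le> Z n \<omega> \<and> Z n \<omega> \<le> 1" for n \<omega> unfolding Z_def by (rule Z_01[of k G]) (rule G01)
  have Xv: "X i \<omega> = 1 \<or> X i \<omega> = -1" if "i \<ge> 1" "\<omega> \<in> space M" for i \<omega>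
    using Xpm that by auto
  have Dmeas: "D j \<in> borel_measurable (F (Suc j))" for j
  proof -
    have "Z j \<in> borel_measurable (F (Suc j))" using measurable_from_subalg[OF sub ZF] by auto
    moreover have "X (Suc j) \<in> borel_measurable (F (Suc j))" using adapted by auto
    ultimately show ?thesis unfolding D_def by measurable
  qed
  have Dbnd: "\<bar>D j \<omega>\<bar> \<le> 2" if "\<omega> \<in> space M" for j \<omega>
    using Xv[of "Suc j" \<omega>] Zb[of j \<omega>] that unfolding D_def by auto
  have Dorth: "integral\<^sup>L M (\<lambda>\<omega>. V \<omega> * D j \<omega>) = 0"
    if VF: "V \<in> borel_measurable (F j)" and Vb: "\<And>\<omega>. \<omega> \<in> space M \<Longrightarrow> \<bar>V \<omega>\<bar> \<le> C" for j V C
  proof (cases "k \<le> j")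
    case True
    have "integral\<^sup>L M (\<lambda>\<omega>. V \<omega> * (X (Suc j) \<omega> - (2 * Z j \<omega> - 1))) = 0"
    proof (rule orth_lemma[OF prob _ XM _ ZF _ _ VF Vb])
      show "subalgebra M (F j)" using filt_sub by auto
      show "\<forall>\<omega>\<in>space M. X (Suc j) \<omega> \<in> {- 1, 1}" using Xpm by auto
      show "\<And>\<omega>. \<omega> \<in> space M \<Longrightarrow> 0 \<le> Z j \<omega> \<and> Z j \<omega> \<le> 1" using Zb by auto
      show "\<forall>A\<in>sets (F j). measure M (A \<inter> {\<omega> \<in> space M. X (Suc j) \<omega> = 1}) = integral\<^sup>L M (\<lambda>\<omega>. indicator A \<omega> * Z j \<omega>)"
        using step True unfolding Z_def G_def by auto
    qed
    then show ?thesis unfolding D_def using True by simp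
  next
    case False
    then show ?thesis unfolding D_def by simp
  qed
  have slln: "AE \<omega> in M. (\<lambda>n. (\<Sum>j<n. D j \<omega>) / real n) \<longlonglongrightarrow> 0"
    by (rule mart_slln[OF prob filt_sub filt_mono Dmeas Dbnd Dorth])
  have Hc: "continuous_on {-1..1} H" unfolding H_def by (rule H_cont)
  have H1: "H 1 < 1" unfolding H_def H_one[OF k] G_def using g_bounds[OF p, of f 1] f by auto
  have Hm1: "H (-1) > -1" unfolding H_def H_mone[OF k] G_def using g_bounds[OF p, of f 0] f by auto
  define \<epsilon> where "\<epsilon> n = 2 * (1 - (\<Prod>l<k. 1 - real l / real n))" for n
  have eps: "\<epsilon> \<longlonglongrightarrow> 0" unfolding \<epsilon>_def by (rule eps_tends)
  show ?thesis using slln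
  proof (rule AE_mp, intro AE_I2 impI)
    fix \<omega> assume w: "\<omega> \<in> space M" and sl: "(\<lambda>n. (\<Sum>j<n. D j \<omega>) / real n) \<longlonglongrightarrow> 0"
    define y where "y n = (\<Sum>i=1..n. X i \<omega>) / real n" for n
    define W where "W n = (\<Sum>i=1..n. X i \<omega>) - (\<Sum>j<n. D j \<omega>)" for n
    have yb: "y n \<in> {-1..1}" for n
    proof -
      have "\<bar>\<Sum>i=1..n. X i \<omega>\<bar> \<le> (\<Sum>i=1..n. \<bar>X i \<omega>\<bar>)" by (rule sum_abs)
      also have "\<dots> = (\<Sum>i=1..n. 1)"
      proof (intro sum.cong refl)
        fix i assume "i \<in> {1..n}"
        then have "X i \<omega> = 1 \<or> X i \<omega> = -1" using Xv w by auto
        then show "\<bar>X i \<omega>\<bar> = 1" by auto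
      qed
      finally have "\<bar>\<Sum>i=1..n. X i \<omega>\<bar> \<le> real n" by simp
      then show ?thesis unfolding y_def by (cases "n = 0") (auto simp: abs_le_iff divide_le_eq le_divide_eq)
    qed
    have dW: "W (Suc n) - W n = (if k \<le> n then 2 * Z n \<omega> - 1 else X (Suc n) \<omega>)" for n
      unfolding W_def D_def by simp
    have conv: "(\<lambda>n. W n / real n - y n) \<longlonglongrightarrow> 0"
    proof -
      have "W n / real n - y n = - ((\<Sum>j<n. D j \<omega>) / real n)" for n
        unfolding W_def y_def by (simp add: diff_divide_distrib)
      then show ?thesis using tendsto_minus[OF sl] by simp
    qed
    have bnd: "\<bar>W (Suc n) - W n\<bar> \<le> 1" for n
      unfolding dW using Zb[of n \<omega>] Xv[of "Suc n" \<omega>] w by auto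
    have approx: "\<bar>2 * Z n \<omega> - 1 - H (y n)\<bar> \<le> \<epsilon> n" if "n \<ge> k" for n
      unfolding Z_def H_def y_def \<epsilon>_def
      by (rule samp_approx[of k G n]) (use k G01 that Xv w in auto)
    have evn: "eventually (\<lambda>n. k \<le> n \<and> \<epsilon> n < c) sequentially" if "c > 0" for c
      using eventually_ge_at_top[of k] order_tendstoD(2)[OF eps that] by (rule eventually_conj)
    show "y \<longlonglongrightarrow> xs"
    proof (rule det_conv[OF conv bnd])
      fix \<delta> :: real assume d: "\<delta> > 0"
      obtain c where c: "c > 0" and hc: "\<forall>y\<in>{-1..1}. y \<ge> xs + \<delta> \<longrightarrow> H y \<le> y - c"
        using drift_up[OF Hc H1 xs _ d] uniq unfolding H_def G_def by blast
      show "\<exists>c>0. eventually (\<lambda>n. y n \<ge> xs + \<delta> \<longrightarrow> W (Suc n) - W n \<le> y n - c) sequentially"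
      proof (intro exI conjI)
        have evn': "eventually (\<lambda>n. k \<le> n \<and> \<epsilon> n < c/2) sequentially" by (rule evn) (use c in simp)
        show "c/2 > 0" using c by simp
        show "eventually (\<lambda>n. y n \<ge> xs + \<delta> \<longrightarrow> W (Suc n) - W n \<le> y n - c/2) sequentially"
        proof (rule eventually_mono[OF evn'], intro impI)
          fix n assume n: "k \<le> n \<and> \<epsilon> n < c/2" and yn: "xs + \<delta> \<le> y n"
          have "W (Suc n) - W n = 2 * Z n \<omega> - 1" using n dW by simp
          also have "\<dots> \<le> H (y n) + \<epsilon> n" using approx[of n] n by auto
          also have "\<dots> \<le> y n - c/2" using hc yb[of n] yn n by force
          finally show "W (Suc n) - W n \<le> y n - c/2" .
        qed
      qed
    next
      fix \<delta> :: real assume d: "\<delta> > 0"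
      obtain c where c: "c > 0" and hc: "\<forall>y\<in>{-1..1}. y \<le> xs - \<delta> \<longrightarrow> H y \<ge> y + c"
        using drift_lo[OF Hc Hm1 xs _ d] uniq unfolding H_def G_def by blast
      show "\<exists>c>0. eventually (\<lambda>n. y n \<le> xs - \<delta> \<longrightarrow> W (Suc n) - W n \<ge> y n + c) sequentially"
      proof (intro exI conjI)
        have evn': "eventually (\<lambda>n. k \<le> n \<and> \<epsilon> n < c/2) sequentially" by (rule evn) (use c in simp)
        show "c/2 > 0" using c by simp
        show "eventually (\<lambda>n. y n \<le> xs - \<delta> \<longrightarrow> W (Suc n) - W n \<ge> y n + c/2) sequentially"
        proof (rule eventually_mono[OF evn'], intro impI)
          fix n assume n: "k \<le> n \<and> \<epsilon> n < c/2" and yn: "y n \<le> xs - \<delta>"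
          have "y n + c/2 \<le> H (y n) - \<epsilon> n" using hc yb[of n] yn n by force
          also have "\<dots> \<le> 2 * Z n \<omega> - 1" using approx[of n] n by auto
          also have "\<dots> = W (Suc n) - W n" using n dW by simp
          finally show "W (Suc n) - W n \<ge> y n + c/2" .
        qed
      qed
    qed
  qed
qed


theorem theorem4p9:
  fixes M :: "'w measure" and F :: "nat \<Rightarrow> 'w measure"
    and X :: "nat \<Rightarrow> 'w \<Rightarrow> real"
    and q p :: real and k :: nat and f :: "real \<Rightarrow> real"
  assumes prob: "prob_space M"
    and q: "0 \<le> q" "q \<le> 1"
    and p: "0 < p" "p < 1" "p \<noteq> 1/2"
    and k: "k \<ge> 1"
    and f: "\<forall>x\<in>{0..1}. f x \<in> {0..1}"
    and filt_sub: "\<forall>n. subalgebra M (F n)"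
    and filt_mono: "\<forall>n m. n \<le> m \<longrightarrow> sets (F n) \<subseteq> sets (F m)"
    and adapted: "\<forall>n. X n \<in> borel_measurable (F n)"
    and X0: "\<forall>\<omega>\<in>space M. X 0 \<omega> = 0"
    and Xpm: "\<forall>n\<ge>1. \<forall>\<omega>\<in>space M. X n \<omega> \<in> {-1, 1}"
    and init_indep: "prob_space.indep_vars M (\<lambda>_. borel) X {1..k}"
    and init_law: "\<forall>i\<in>{1..k}. measure M {\<omega>\<in>space M. X i \<omega> = 1} = q"
    and step: "\<forall>n\<ge>k. \<forall>A\<in>sets (F n).
        measure M (A \<inter> {\<omega>\<in>space M. X (Suc n) \<omega> = 1}) =
        integral\<^sup>L M (\<lambda>\<omega>. indicator A \<omega> * samp_prob k n (g_fun p f) (\<lambda>i. X i \<omega>))"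
    and A: "(p > 1/2 \<and> f 1 < p / (2*p - 1)) \<or> (p < 1/2 \<and> f 0 < (1 - p) / (1 - 2*p))"
  shows
    "(\<forall>xs. xs \<in> {-1..1} \<and> H_fun k (g_fun p f) xs = xs \<and>
            (\<forall>y\<in>{-1..1}. H_fun k (g_fun p f) y = y \<longrightarrow> y = xs) \<longrightarrow>
          (AE \<omega> in M. (\<lambda>n. (\<Sum>i=1..n. X i \<omega>) / real n) \<longlonglongrightarrow> xs))
     \<and> ((strict_antimono_on {-1<..<1} (H_fun k (g_fun p f))
          \<or> strictly_convex_on {-1<..<1} (H_fun k (g_fun p f))
          \<or> strictly_concave_on {-1<..<1} (H_fun k (g_fun p f))
          \<or> contraction_on {-1<..<1} (H_fun k (g_fun p f))) \<longrightarrow>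
        (\<exists>xs\<in>{-1<..<1}. H_fun k (g_fun p f) xs = xs \<and>
            (\<forall>y\<in>{-1<..<1}. H_fun k (g_fun p f) y = y \<longrightarrow> y = xs) \<and>
            (AE \<omega> in M. (\<lambda>n. (\<Sum>i=1..n. X i \<omega>) / real n) \<longlonglongrightarrow> xs)))"
  proof -
  let ?H = "H_fun k (g_fun p f)"
  have Hc: "continuous_on {-1..1} ?H" by (rule H_cont)
  have H1: "?H 1 < 1" unfolding H_one[OF k] using g_bounds[OF p(1,2), of f 1] f by auto
  have Hm1: "?H (-1) > -1" unfolding H_mone[OF k] using g_bounds[OF p(1,2), of f 0] f by auto
  have conv: "AE \<omega> in M. (\<lambda>n. (\<Sum>i=1..n. X i \<omega>) / real n) \<longlonglongrightarrow> xs"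
    if "xs \<in> {-1..1}" "\<forall>y\<in>{-1..1}. ?H y = y \<longrightarrow> y = xs" for xs
    by (rule main_conv[OF prob p(1) p(2) k f filt_sub filt_mono adapted Xpm step that])
  show ?thesis
  proof (intro conjI allI impI)
    fix xs assume "xs \<in> {-1..1} \<and> ?H xs = xs \<and> (\<forall>y\<in>{-1..1}. ?H y = y \<longrightarrow> y = xs)"
    then have a1: "xs \<in> {-1..1}" and a2: "\<forall>y\<in>{-1..1}. ?H y = y \<longrightarrow> y = xs" by simp_all
    show "AE \<omega> in M. (\<lambda>n. (\<Sum>i=1..n. X i \<omega>) / real n) \<longlonglongrightarrow> xs" by (rule conv[OF a1 a2])
  next
    assume B: "strict_antimono_on {-1<..<1} ?H \<or> strictly_convex_on {-1<..<1} ?H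
          \<or> strictly_concave_on {-1<..<1} ?H \<or> contraction_on {-1<..<1} ?H"
    obtain z where z: "z \<in> {-1<..<1}" "?H z = z" using fix_exists[OF Hc H1 Hm1] by blast
    have uI: "\<forall>y\<in>{-1<..<1}. ?H y = y \<longrightarrow> y = z"
    proof (intro ballI impI)
      fix y assume y: "y \<in> {-1<..<1}" and hy: "?H y = y"
      show "y = z" by (rule uniq_B[OF Hc H1 Hm1 B y hy z(1) z(2)])
    qed
    have uC: "\<forall>y\<in>{-1..1}. ?H y = y \<longrightarrow> y = z"
    proof (intro ballI impI)
      fix y assume y: "y \<in> {-1..1}" and hy: "?H y = y"
      have "y \<noteq> 1" using hy H1 by auto
      moreover have "y \<noteq> -1" using hy Hm1 by auto
      ultimately have "y \<in> {-1<..<1}" using y by auto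
      then show "y = z" using uI hy by simp
    qed
    show "\<exists>xs\<in>{-1<..<1}. ?H xs = xs \<and> (\<forall>y\<in>{-1<..<1}. ?H y = y \<longrightarrow> y = xs) \<and>
            (AE \<omega> in M. (\<lambda>n. (\<Sum>i=1..n. X i \<omega>) / real n) \<longlonglongrightarrow> xs)"
    proof (rule bexI[OF _ z(1)], intro conjI)
      show "?H z = z" by (rule z(2))
      show "\<forall>y\<in>{-1<..<1}. ?H y = y \<longrightarrow> y = z" by (rule uI)
      show "AE \<omega> in M. (\<lambda>n. (\<Sum>i=1..n. X i \<omega>) / real n) \<longlonglongrightarrow> z"
        by (rule conv) (use z(1) uC in auto)
    qed
  qed
qed

end
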